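(* For any planar weighted graph $(G,x)$ and any set of dual edges $\varkappa\subset E(G^* )$, $$\sum_{P\in\mathcal E(G)}(-1)^{\varkappa\cdot P}x(P)=(-1)^{|\varkappa|}\sum_{D\in\mathcal D(G^K)}(-1)^{t(D)}(-1)^{\varkappa\cdot D}x^K(D).$$
   Context: Let $G$ be a finite connected graph embedded in the plane, with edge weights $x=(x_e)$. Let $\vec E(G)$ be the set of oriented edges, with origin $o(e)$ and reversal $\bar e$. $\mathcal E(G)$ is the set of even subgraphs and $x(P)=\prod_{e\in P}x_e$. $G^*$ is the planar dual and $e^*$ the dual of $e$. Terminal graph $G^K$. Its vertex set is $\vec E(G)$. It has long edges $\{e,\bar e\}$ of weight $1$, and short edges $\{e,e'\}$ of weight $(x_ex_{e'})^{1/2}$ for each pair $e\ne e'$ with $o(e)=o(e')$. $\mathcal D(G^K)$ is the set of its perfect matchings and $x^K(D)$ the product of the weights of the edges of $D$. $t(D)$ is the number of pairs of short edges of $D$ at the same vertex $v$ whose endpoints interlace in the cyclic order around $v$. Intersection counts. $|\varkappa|$ is the number of edges in $\varkappa$. $\varkappa\cdot P$ is the number of $e\in P$ with $e^*\in\varkappa$. $\varkappa\cdot D$ is the number of long edges $\{e,\bar e\}\in D$ whose underlying edge of $G$ has its dual in $\varkappa$. *)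

theory Defs
  imports Complex_Main
begin

text \<open>A planar embedded graph is encoded as a combinatorial map (rotation system):
  a finite set H of darts (oriented edges), the reversal involution alpha
  (e to e-bar) and the rotation sigma, giving the cyclic (counterclockwise) order
  of the darts around their common origin.\<close>

definition orb :: "('d \<Rightarrow> 'd) \<Rightarrow> 'd \<Rightarrow> 'd set" where
  "orb f d = {(f ^^ n) d | n. True}"

definition origin :: "('d \<Rightarrow> 'd) \<Rightarrow> 'd \<Rightarrow> 'd set" where
  "origin \<sigma> d = orb \<sigma> d"

definition edge_of :: "('d \<Rightarrow> 'd) \<Rightarrow> 'd \<Rightarrow> 'd set" where
  "edge_of \<alpha> d = {d, \<alpha> d}"

definition map_edges :: "'d set \<Rightarrow> ('d \<Rightarrow> 'd) \<Rightarrow> 'd set set" where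
  "map_edges H \<alpha> = edge_of \<alpha> ` H"

definition map_verts :: "'d set \<Rightarrow> ('d \<Rightarrow> 'd) \<Rightarrow> 'd set set" where
  "map_verts H \<sigma> = origin \<sigma> ` H"

definition map_faces :: "'d set \<Rightarrow> ('d \<Rightarrow> 'd) \<Rightarrow> ('d \<Rightarrow> 'd) \<Rightarrow> 'd set set" where
  "map_faces H \<alpha> \<sigma> = orb (\<sigma> \<circ> \<alpha>) ` H"

definition comb_map :: "'d set \<Rightarrow> ('d \<Rightarrow> 'd) \<Rightarrow> ('d \<Rightarrow> 'd) \<Rightarrow> bool" where
  "comb_map H \<alpha> \<sigma> \<longleftrightarrow> finite H \<and> H \<noteq> {} \<and>
     (\<forall>d\<in>H. \<alpha> d \<in> H \<and> \<alpha> (\<alpha> d) = d \<and> \<alpha> d \<noteq> d) \<and> bij_betw \<sigma> H H"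

definition connected_map :: "'d set \<Rightarrow> ('d \<Rightarrow> 'd) \<Rightarrow> ('d \<Rightarrow> 'd) \<Rightarrow> bool" where
  "connected_map H \<alpha> \<sigma> \<longleftrightarrow>
     (\<forall>d\<in>H. \<forall>d'\<in>H. (\<lambda>a b. b = \<alpha> a \<or> b = \<sigma> a)\<^sup>*\<^sup>* d d')"

definition planar_map :: "'d set \<Rightarrow> ('d \<Rightarrow> 'd) \<Rightarrow> ('d \<Rightarrow> 'd) \<Rightarrow> bool" where
  "planar_map H \<alpha> \<sigma> \<longleftrightarrow> comb_map H \<alpha> \<sigma> \<and> connected_map H \<alpha> \<sigma> \<and>
     int (card (map_verts H \<sigma>)) - int (card (map_edges H \<alpha>))
       + int (card (map_faces H \<alpha> \<sigma>)) = 2"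

text \<open>Dual map: same darts and reversal, rotation sigma o alpha (faces become vertices).
  The dual edge e* of e = {d, alpha d} is the alpha-orbit {d, alpha d} of the dual map,
  i.e. the same set of darts.\<close>
definition dual_rot :: "('d \<Rightarrow> 'd) \<Rightarrow> ('d \<Rightarrow> 'd) \<Rightarrow> ('d \<Rightarrow> 'd)" where
  "dual_rot \<alpha> \<sigma> = \<sigma> \<circ> \<alpha>"

definition dual_edges :: "'d set \<Rightarrow> ('d \<Rightarrow> 'd) \<Rightarrow> ('d \<Rightarrow> 'd) \<Rightarrow> 'd set set" where
  "dual_edges H \<alpha> \<sigma> = map_edges H \<alpha>"

definition dual_edge :: "'d set \<Rightarrow> 'd set" where
  "dual_edge e = e"

text \<open>Even subgraphs: sets of edges with even degree at each vertex (loops count twice).\<close>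
definition even_subgraphs :: "'d set \<Rightarrow> ('d \<Rightarrow> 'd) \<Rightarrow> ('d \<Rightarrow> 'd) \<Rightarrow> 'd set set set" where
  "even_subgraphs H \<alpha> \<sigma> = {P. P \<subseteq> map_edges H \<alpha> \<and>
     (\<forall>v\<in>map_verts H \<sigma>. even (card {d\<in>v. edge_of \<alpha> d \<in> P}))}"

text \<open>Terminal graph G^K: vertex set H; edges tagged True (long) or False (short),
  so that it may be a multigraph.\<close>
definition K_edges :: "'d set \<Rightarrow> ('d \<Rightarrow> 'd) \<Rightarrow> ('d \<Rightarrow> 'd) \<Rightarrow> ('d set \<times> bool) set" where
  "K_edges H \<alpha> \<sigma> = {(edge_of \<alpha> d, True) | d. d \<in> H} \<union>
     {({a, b}, False) | a b. a \<in> H \<and> b \<in> H \<and> a \<noteq> b \<and> origin \<sigma> a = origin \<sigma> b}"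

definition K_weight :: "('d \<Rightarrow> 'd) \<Rightarrow> ('d set \<Rightarrow> real) \<Rightarrow> 'd set \<times> bool \<Rightarrow> real" where
  "K_weight \<alpha> x k = (if snd k then 1 else sqrt (\<Prod>d\<in>fst k. x (edge_of \<alpha> d)))"

definition K_matchings :: "'d set \<Rightarrow> ('d \<Rightarrow> 'd) \<Rightarrow> ('d \<Rightarrow> 'd) \<Rightarrow> ('d set \<times> bool) set set" where
  "K_matchings H \<alpha> \<sigma> = {D. D \<subseteq> K_edges H \<alpha> \<sigma> \<and> (\<forall>d\<in>H. \<exists>!k. k \<in> D \<and> d \<in> fst k)}"

text \<open>Cyclic order around a vertex: c lies strictly between a and b when turning
  from a (in the rotation direction) towards b.\<close>
definition rot_pos :: "('d \<Rightarrow> 'd) \<Rightarrow> 'd \<Rightarrow> 'd \<Rightarrow> nat" where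
  "rot_pos \<sigma> a c = (LEAST k. (\<sigma> ^^ k) a = c)"

definition cbetween :: "('d \<Rightarrow> 'd) \<Rightarrow> 'd \<Rightarrow> 'd \<Rightarrow> 'd \<Rightarrow> bool" where
  "cbetween \<sigma> a b c \<longleftrightarrow> 0 < rot_pos \<sigma> a c \<and> rot_pos \<sigma> a c < rot_pos \<sigma> a b"

definition interlace :: "('d \<Rightarrow> 'd) \<Rightarrow> 'd set \<Rightarrow> 'd set \<Rightarrow> bool" where
  "interlace \<sigma> S T \<longleftrightarrow> (\<exists>a b c d. S = {a, b} \<and> T = {c, d} \<and>
     cbetween \<sigma> a b c \<noteq> cbetween \<sigma> a b d)"

definition t_count :: "('d \<Rightarrow> 'd) \<Rightarrow> ('d set \<times> bool) set \<Rightarrow> nat" where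
  "t_count \<sigma> D = card {{k1, k2} | k1 k2. k1 \<in> D \<and> k2 \<in> D \<and> k1 \<noteq> k2 \<and>
     \<not> snd k1 \<and> \<not> snd k2 \<and>
     (\<exists>v. fst k1 \<union> fst k2 \<subseteq> origin \<sigma> v) \<and> interlace \<sigma> (fst k1) (fst k2)}"

definition kappa_dot_P :: "'d set set \<Rightarrow> 'd set set \<Rightarrow> nat" where
  "kappa_dot_P \<kappa> P = card {e \<in> P. dual_edge e \<in> \<kappa>}"

definition kappa_dot_D :: "'d set set \<Rightarrow> ('d set \<times> bool) set \<Rightarrow> nat" where
  "kappa_dot_D \<kappa> D = card {k \<in> D. snd k \<and> dual_edge (fst k) \<in> \<kappa>}"

end

theory Submission
  imports Defs
begin


locale rot = fixes H :: "'d set" and \<sigma> :: "'d \<Rightarrow> 'd"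
  assumes finH: "finite H" and bijs: "bij_betw \<sigma> H H"
begin

lemma it_in: "d \<in> H \<Longrightarrow> (\<sigma> ^^ n) d \<in> H"
  using bij_betw_funpow[OF bijs, of n] by (auto simp: bij_betw_def)

lemma per_ex: assumes d: "d \<in> H" shows "\<exists>n>0. (\<sigma> ^^ n) d = d"
proof -
  have "\<not> inj_on (\<lambda>k. (\<sigma> ^^ k) d) {..card H}"
  proof
    assume "inj_on (\<lambda>k. (\<sigma> ^^ k) d) {..card H}"
    moreover have "(\<lambda>k. (\<sigma> ^^ k) d) ` {..card H} \<subseteq> H" using it_in d by auto
    ultimately have "card {..card H} \<le> card H" using card_inj_on_le finH by blast
    then show False by simp
  qed
  then obtain i j where ij: "i < j" "(\<sigma> ^^ i) d = (\<sigma> ^^ j) d"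
    by (auto simp: inj_on_def) (metis linorder_neqE_nat)
  have inj: "inj_on (\<sigma> ^^ i) H" using bij_betw_funpow[OF bijs, of i] by (auto simp: bij_betw_def)
  have "(\<sigma> ^^ j) d = (\<sigma> ^^ i) ((\<sigma> ^^ (j - i)) d)"
    using ij by (metis funpow_add le_add_diff_inverse less_imp_le_nat o_apply)
  then have "(\<sigma> ^^ (j - i)) d = d" using inj ij d it_in by (metis inj_on_def)
  then show ?thesis using ij by (intro exI[of _ "j - i"]) auto
qed

definition per where "per d = (LEAST n. 0 < n \<and> (\<sigma> ^^ n) d = d)"

lemma per: assumes "d \<in> H" shows "0 < per d" "(\<sigma> ^^ per d) d = d"
  "\<And>m. 0 < m \<Longrightarrow> m < per d \<Longrightarrow> (\<sigma> ^^ m) d \<noteq> d"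
proof -
  obtain n where "0 < n \<and> (\<sigma> ^^ n) d = d" using per_ex assms by blast
  then have "0 < per d \<and> (\<sigma> ^^ per d) d = d" unfolding per_def by (rule LeastI)
  then show "0 < per d" "(\<sigma> ^^ per d) d = d" by auto
  show "\<And>m. 0 < m \<Longrightarrow> m < per d \<Longrightarrow> (\<sigma> ^^ m) d \<noteq> d"
    unfolding per_def using not_less_Least by blast
qed

lemma per_mult: "d \<in> H \<Longrightarrow> (\<sigma> ^^ (per d * q)) d = d"
  by (induction q) (auto simp: funpow_add per(2) simp del: funpow.simps)

lemma fp_mod: assumes "d \<in> H" shows "(\<sigma> ^^ m) d = (\<sigma> ^^ (m mod per d)) d"
proof -
  have "m = m mod per d + per d * (m div per d)" by simp
  then have "(\<sigma> ^^ m) d = (\<sigma> ^^ (m mod per d)) ((\<sigma> ^^ (per d * (m div per d))) d)"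
    by (metis funpow_add o_apply)
  then show ?thesis using per_mult assms by simp
qed

lemma fp_inj: assumes "d \<in> H" shows "inj_on (\<lambda>k. (\<sigma> ^^ k) d) {0..<per d}"
  by (rule inj_on_funpow_least) (use per[OF assms] in auto)

lemma orb_eq: assumes "d \<in> H" shows "orb \<sigma> d = (\<lambda>k. (\<sigma> ^^ k) d) ` {0..<per d}"
proof -
  have "(\<sigma> ^^ n) d \<in> (\<lambda>k. (\<sigma> ^^ k) d) ` {0..<per d}" for n
    using fp_mod[OF assms, of n] per(1)[OF assms] by auto
  then show ?thesis unfolding orb_def by auto
qed

lemma orb_card: "d \<in> H \<Longrightarrow> card (orb \<sigma> d) = per d"
  using orb_eq fp_inj by (simp add: card_image)

lemma orb_sub: "d \<in> H \<Longrightarrow> orb \<sigma> d \<subseteq> H"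
  using it_in by (auto simp: orb_def)

lemma orb_self: "d \<in> orb \<sigma> d"
  unfolding orb_def by (auto intro: exI[of _ 0])

lemma rot_pos_eq: assumes "d \<in> H" "k < per d" "(\<sigma> ^^ k) d = c"
  shows "rot_pos \<sigma> d c = k"
  unfolding rot_pos_def
proof (rule Least_equality)
  show "(\<sigma> ^^ k) d = c" by fact
  fix j assume "(\<sigma> ^^ j) d = c"
  then have "(\<sigma> ^^ (j mod per d)) d = (\<sigma> ^^ k) d" using fp_mod assms by metis
  then have "j mod per d = k" using fp_inj[OF assms(1)] assms per(1)[OF assms(1)]
    by (auto simp: inj_on_def)
  then show "k \<le> j" by (metis mod_less_eq_dividend)
qed

lemma rot_pos: assumes "d \<in> H" "c \<in> orb \<sigma> d"
  shows "rot_pos \<sigma> d c < per d" "(\<sigma> ^^ rot_pos \<sigma> d c) d = c"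
proof -
  obtain k where "k < per d" "(\<sigma> ^^ k) d = c" using assms orb_eq by auto
  then show "rot_pos \<sigma> d c < per d" "(\<sigma> ^^ rot_pos \<sigma> d c) d = c"
    using rot_pos_eq assms by auto
qed

lemma rot_pos_inj: assumes "d \<in> H" shows "inj_on (rot_pos \<sigma> d) (orb \<sigma> d)"
  using rot_pos[OF assms] by (metis inj_onI)

lemma rot_pos_self: "d \<in> H \<Longrightarrow> rot_pos \<sigma> d d = 0"
  using rot_pos_eq per by auto

lemma orb_shift: assumes "d \<in> H" "c \<in> orb \<sigma> d" shows "orb \<sigma> c = orb \<sigma> d"
proof -
  obtain k where k: "(\<sigma> ^^ k) d = c" using assms(2) unfolding orb_def by auto
  have "(\<sigma> ^^ n) c \<in> orb \<sigma> d" for n using k unfolding orb_def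
    by (auto intro!: exI[of _ "n + k"] simp: funpow_add)
  moreover have "(\<sigma> ^^ n) d \<in> orb \<sigma> c" for n
  proof -
    have "(\<sigma> ^^ n) d = (\<sigma> ^^ ((n + per d * (k+1) - k))) c"
    proof -
      have "k \<le> k * per d" using per(1)[OF assms(1)] by simp
      moreover have "per d * (k+1) = k * per d + per d" by simp
      ultimately have "k \<le> n + per d * (k+1)" by linarith
      then have "n + per d * (k+1) - k + k = n + per d * (k+1)"
        by simp
      then have "(\<sigma> ^^ ((n + per d * (k+1) - k))) c = (\<sigma> ^^ (n + per d * (k+1))) d"
        using k by (metis funpow_add o_apply)
      also have "\<dots> = (\<sigma> ^^ n) d" using per_mult[OF assms(1), of "k+1"] by (simp add: funpow_add)
      finally show ?thesis by simp
    qed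
    then show ?thesis unfolding orb_def by auto
  qed
  ultimately show ?thesis unfolding orb_def by blast
qed

lemma per_shift: "d \<in> H \<Longrightarrow> c \<in> orb \<sigma> d \<Longrightarrow> per c = per d"
  using orb_shift orb_card orb_sub by (metis subsetD)

lemma rot_pos_rel: assumes a: "a \<in> H" and b: "b \<in> orb \<sigma> a" and c: "c \<in> orb \<sigma> a"
  shows "rot_pos \<sigma> b c = (rot_pos \<sigma> a c + per a - rot_pos \<sigma> a b) mod per a"
proof -
  have bH: "b \<in> H" using orb_sub a b by auto
  let ?k = "(rot_pos \<sigma> a c + per a - rot_pos \<sigma> a b) mod per a"
  have pb: "per b = per a" using per_shift a b by auto
  have lt: "?k < per b" using pb per(1)[OF a] by simp
  have "(\<sigma> ^^ ?k) b = (\<sigma> ^^ (?k + rot_pos \<sigma> a b)) a"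
    using rot_pos[OF a b] by (metis funpow_add o_apply)
  also have "\<dots> = (\<sigma> ^^ ((?k + rot_pos \<sigma> a b) mod per a)) a" using fp_mod a by blast
  also have "(?k + rot_pos \<sigma> a b) mod per a = rot_pos \<sigma> a c"
  proof -
    have "(?k + rot_pos \<sigma> a b) mod per a = (rot_pos \<sigma> a c + per a - rot_pos \<sigma> a b + rot_pos \<sigma> a b) mod per a"
      by (simp add: mod_add_left_eq)
    also have "\<dots> = (rot_pos \<sigma> a c + per a) mod per a"
      using rot_pos(1)[OF a b] by simp
    also have "\<dots> = rot_pos \<sigma> a c" using rot_pos(1)[OF a c] by simp
    finally show ?thesis .
  qed
  also have "(\<sigma> ^^ rot_pos \<sigma> a c) a = c" using rot_pos[OF a c] by simp
  finally show ?thesis using rot_pos_eq[OF bH lt] by simp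
qed

end



definition cycL :: "nat \<Rightarrow> nat \<Rightarrow> nat \<Rightarrow> bool" where
  "cycL i k j \<longleftrightarrow> (i<k\<and>k<j)\<or>(k<j\<and>j<i)\<or>(j<i\<and>i<k)"

lemma L_swap: "distinct [i,j,k,l] \<Longrightarrow> (cycL i k j \<noteq> cycL i l j) = (cycL j k i \<noteq> cycL j l i)"
  unfolding cycL_def by (cases "i < j"; cases "i < k"; cases "i < l"; cases "j < k"; cases "j < l"; cases "k < l") auto
lemma L_sym: "distinct [i,j,k,l] \<Longrightarrow> (cycL i k j \<noteq> cycL i l j) = (cycL k i l \<noteq> cycL k j l)"
  unfolding cycL_def by (cases "i < j"; cases "i < k"; cases "i < l"; cases "j < k"; cases "j < l"; cases "k < l") auto

lemma modshift: assumes "(i::nat) < n" "k < n" shows "(k + n - i) mod n = (if i \<le> k then k - i else k + n - i)"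
proof (cases "i \<le> k")
  case True
  then have e: "k + n - i = (k - i) + n" by arith
  have "(k + n - i) mod n = (k - i + n) mod n" by (simp only: e)
  also have "\<dots> = k - i" using assms by simp
  finally show ?thesis using True by simp
qed (use assms in auto)

lemma cyc_arith: "(i::nat)<n \<Longrightarrow> j<n \<Longrightarrow> k<n \<Longrightarrow> distinct [i,j,k] \<Longrightarrow>
   (0 < (k+n-i) mod n \<and> (k+n-i) mod n < (j+n-i) mod n) \<longleftrightarrow> cycL i k j"
  by (cases "i < j"; cases "i < k"; cases "j < k") (auto simp: modshift cycL_def)

context rot begin

lemma cbetween_lin: assumes a: "a \<in> H" and xyz: "x \<in> orb \<sigma> a" "y \<in> orb \<sigma> a" "z \<in> orb \<sigma> a"
  and d: "distinct [x,y,z]"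
  shows "cbetween \<sigma> x y z \<longleftrightarrow> cycL (rot_pos \<sigma> a x) (rot_pos \<sigma> a z) (rot_pos \<sigma> a y)"
proof -
  have dd: "distinct [rot_pos \<sigma> a x, rot_pos \<sigma> a y, rot_pos \<sigma> a z]"
    using rot_pos_inj[OF a] xyz d by (auto simp: inj_on_def)
  show ?thesis unfolding cbetween_def rot_pos_rel[OF a xyz(1,3)] rot_pos_rel[OF a xyz(1,2)]
    by (rule cyc_arith) (use rot_pos(1)[OF a] xyz dd in auto)
qed

lemma interlace_lin: assumes a: "a \<in> H" and xyz: "x \<in> orb \<sigma> a" "y \<in> orb \<sigma> a" "z \<in> orb \<sigma> a" "w \<in> orb \<sigma> a"
  and d: "distinct [x,y,z,w]"
  shows "interlace \<sigma> {x,y} {z,w} \<longleftrightarrow>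
     (cycL (rot_pos \<sigma> a x) (rot_pos \<sigma> a z) (rot_pos \<sigma> a y) \<noteq> cycL (rot_pos \<sigma> a x) (rot_pos \<sigma> a w) (rot_pos \<sigma> a y))"
proof -
  let ?P = "rot_pos \<sigma> a"
  have dd: "distinct [?P x, ?P y, ?P z, ?P w]"
    using rot_pos_inj[OF a] xyz d by (auto simp: inj_on_def)
  have c: "\<And>p q r. p \<in> {x,y,z,w} \<Longrightarrow> q \<in> {x,y,z,w} \<Longrightarrow> r \<in> {x,y,z,w} \<Longrightarrow> distinct [p,q,r] \<Longrightarrow>
     cbetween \<sigma> p q r \<longleftrightarrow> cycL (?P p) (?P r) (?P q)"
    using cbetween_lin[OF a] xyz by blast
  show ?thesis
  proof
    assume "interlace \<sigma> {x,y} {z,w}"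
    then obtain p q r s where pq: "{x,y} = {p,q}" "{z,w} = {r,s}" and ne: "cbetween \<sigma> p q r \<noteq> cbetween \<sigma> p q s"
      unfolding interlace_def by blast
    from pq have "(p=x\<and>q=y \<or> p=y\<and>q=x) \<and> (r=z\<and>s=w \<or> r=w\<and>s=z)" by (auto simp: doubleton_eq_iff)
    then show "cycL (?P x) (?P z) (?P y) \<noteq> cycL (?P x) (?P w) (?P y)"
      using ne c d L_swap[OF dd] by (elim conjE disjE) auto
  next
    assume "cycL (?P x) (?P z) (?P y) \<noteq> cycL (?P x) (?P w) (?P y)"
    then have "cbetween \<sigma> x y z \<noteq> cbetween \<sigma> x y w" using c d by auto
    then show "interlace \<sigma> {x,y} {z,w}" unfolding interlace_def by blast
  qed
qed

lemma interlace_sym: assumes a: "a \<in> H" and xyz: "x \<in> orb \<sigma> a" "y \<in> orb \<sigma> a" "z \<in> orb \<sigma> a" "w \<in> orb \<sigma> a"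
  and d: "distinct [x,y,z,w]"
  shows "interlace \<sigma> {z,w} {x,y} \<longleftrightarrow> interlace \<sigma> {x,y} {z,w}"
proof -
  have dd: "distinct [rot_pos \<sigma> a x, rot_pos \<sigma> a y, rot_pos \<sigma> a z, rot_pos \<sigma> a w]"
    using rot_pos_inj[OF a] xyz d by (auto simp: inj_on_def)
  have d2: "distinct [z,w,x,y]" using d by auto
  show ?thesis unfolding interlace_lin[OF a xyz d] interlace_lin[OF a xyz(3,4,1,2) d2]
    using L_sym[OF dd] by simp
qed

lemma interlace_base: assumes a: "a \<in> H" and xyz: "b \<in> orb \<sigma> a" "z \<in> orb \<sigma> a" "w \<in> orb \<sigma> a"
  and d: "distinct [a,b,z,w]"
  shows "interlace \<sigma> {a,b} {z,w} \<longleftrightarrow>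
     ((rot_pos \<sigma> a z < rot_pos \<sigma> a b) \<noteq> (rot_pos \<sigma> a w < rot_pos \<sigma> a b))"
proof -
  have dd: "distinct [rot_pos \<sigma> a a, rot_pos \<sigma> a b, rot_pos \<sigma> a z, rot_pos \<sigma> a w]"
    using rot_pos_inj[OF a] xyz d orb_self by (auto simp: inj_on_def)
  then show ?thesis unfolding interlace_lin[OF a orb_self xyz d] cycL_def rot_pos_self[OF a]
    by auto
qed

end



definition Cd :: "('d \<Rightarrow> 'd) \<Rightarrow> 'd set \<times> bool \<Rightarrow> 'd set \<times> bool \<Rightarrow> bool" where
  "Cd \<sigma> k1 k2 \<longleftrightarrow> \<not> snd k1 \<and> \<not> snd k2 \<and>
     (\<exists>v. fst k1 \<union> fst k2 \<subseteq> origin \<sigma> v) \<and> interlace \<sigma> (fst k1) (fst k2)"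

definition TT where "TT \<sigma> M = {{k1, k2} | k1 k2. k1 \<in> M \<and> k2 \<in> M \<and> k1 \<noteq> k2 \<and> Cd \<sigma> k1 k2}"

lemma t_count_TT: "t_count \<sigma> M = card (TT \<sigma> M)"
  unfolding t_count_def TT_def Cd_def by (simp add: conj_assoc)

lemma TT_fin: "finite M \<Longrightarrow> finite (TT \<sigma> M)"
proof -
  assume "finite M"
  moreover have "TT \<sigma> M \<subseteq> Pow M" unfolding TT_def by auto
  ultimately show ?thesis by (meson finite_Pow_iff finite_subset)
qed

lemma TT_insert: assumes "finite M" "k \<notin> M"
  shows "card (TT \<sigma> (insert k M)) = card (TT \<sigma> M) + card {k2 \<in> M. Cd \<sigma> k k2 \<or> Cd \<sigma> k2 k}"
proof -
  have eq: "TT \<sigma> (insert k M) = TT \<sigma> M \<union> (\<lambda>k2. {k, k2}) ` {k2 \<in> M. Cd \<sigma> k k2 \<or> Cd \<sigma> k2 k}"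
  proof
    show "TT \<sigma> (insert k M) \<subseteq> TT \<sigma> M \<union> (\<lambda>k2. {k, k2}) ` {k2 \<in> M. Cd \<sigma> k k2 \<or> Cd \<sigma> k2 k}"
    proof
      fix x assume "x \<in> TT \<sigma> (insert k M)"
      then obtain k1 k2 where x: "x = {k1,k2}" "k1 \<in> insert k M" "k2 \<in> insert k M" "k1 \<noteq> k2" "Cd \<sigma> k1 k2"
        unfolding TT_def by blast
      show "x \<in> TT \<sigma> M \<union> (\<lambda>k2. {k, k2}) ` {k2 \<in> M. Cd \<sigma> k k2 \<or> Cd \<sigma> k2 k}"
      proof (cases "k1 = k")
        case True then show ?thesis using x by auto
      next
        case f1: False
        show ?thesis
        proof (cases "k2 = k")
          case True
          then have "x = {k, k1}" "k1 \<in> M" using x f1 by auto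
          then show ?thesis using x True by auto
        next
          case False
          then have "x \<in> TT \<sigma> M" using x f1 unfolding TT_def by blast
          then show ?thesis by blast
        qed
      qed
    qed
  next
    show "TT \<sigma> M \<union> (\<lambda>k2. {k, k2}) ` {k2 \<in> M. Cd \<sigma> k k2 \<or> Cd \<sigma> k2 k} \<subseteq> TT \<sigma> (insert k M)"
    proof
      fix x assume "x \<in> TT \<sigma> M \<union> (\<lambda>k2. {k, k2}) ` {k2 \<in> M. Cd \<sigma> k k2 \<or> Cd \<sigma> k2 k}"
      then show "x \<in> TT \<sigma> (insert k M)"
      proof
        assume "x \<in> TT \<sigma> M" then show ?thesis unfolding TT_def by blast
      next
        assume "x \<in> (\<lambda>k2. {k, k2}) ` {k2 \<in> M. Cd \<sigma> k k2 \<or> Cd \<sigma> k2 k}"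
        then obtain k2 where k2: "x = {k, k2}" "k2 \<in> M" "Cd \<sigma> k k2 \<or> Cd \<sigma> k2 k" by blast
        have ne: "k \<noteq> k2" using k2 assms(2) by auto
        show ?thesis using k2(3)
        proof
          assume "Cd \<sigma> k k2" then show ?thesis unfolding TT_def using k2 ne by blast
        next
          assume "Cd \<sigma> k2 k"
          moreover have "x = {k2, k}" using k2 by auto
          ultimately show ?thesis unfolding TT_def using k2 ne by blast
        qed
      qed
    qed
  qed
  have disj: "TT \<sigma> M \<inter> (\<lambda>k2. {k, k2}) ` {k2 \<in> M. Cd \<sigma> k k2 \<or> Cd \<sigma> k2 k} = {}"
  proof -
    have "\<forall>x\<in>TT \<sigma> M. x \<subseteq> M" unfolding TT_def by blast
    moreover have "\<forall>x\<in>(\<lambda>k2. {k, k2}) ` {k2 \<in> M. Cd \<sigma> k k2 \<or> Cd \<sigma> k2 k}. k \<in> x" by blast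
    ultimately show ?thesis using assms(2) by blast
  qed
  have inj: "inj_on (\<lambda>k2. {k, k2}) {k2 \<in> M. Cd \<sigma> k k2 \<or> Cd \<sigma> k2 k}"
    using assms(2) by (auto simp: inj_on_def doubleton_eq_iff)
  show ?thesis unfolding eq
    by (subst card_Un_disjoint) (use disj inj TT_fin[OF assms(1)] assms(1) in \<open>auto simp: card_image\<close>)
qed

lemma alt_sum: "finite (S::nat set) \<Longrightarrow>
  (\<Sum>j\<in>S. (-1::real) ^ card {i\<in>S. i < j}) = (if odd (card S) then 1 else 0)"
proof (induction "card S" arbitrary: S rule: less_induct)
  case less
  show ?case
  proof (cases "S = {}")
    case True then show ?thesis by simp
  next
    case False
    define m where "m = Max S"
    have m: "m \<in> S" "\<And>i. i \<in> S \<Longrightarrow> i \<le> m" using False less.prems m_def by auto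
    define S' where "S' = S - {m}"
    have cS: "card S = Suc (card S')" using card_Suc_Diff1[of S m] m less.prems S'_def by simp
    have IH: "(\<Sum>j\<in>S'. (-1::real) ^ card {i\<in>S'. i < j}) = (if odd (card S') then 1 else 0)"
      using less(1)[of S'] cS less.prems S'_def by simp
    have "S = insert m S'" using m S'_def by auto
    have s1: "(\<Sum>j\<in>S. (-1::real) ^ card {i\<in>S. i < j}) =
       (-1) ^ card {i\<in>S. i < m} + (\<Sum>j\<in>S'. (-1::real) ^ card {i\<in>S. i < j})"
      using m less.prems S'_def by (simp add: sum.remove)
    have "{i\<in>S. i < m} = S'" using m S'_def by (auto simp: order.not_eq_order_implies_strict)
    moreover have "\<And>j. j \<in> S' \<Longrightarrow> {i\<in>S. i < j} = {i\<in>S'. i < j}" using m S'_def by (auto dest: leD)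
    ultimately have "(\<Sum>j\<in>S. (-1::real) ^ card {i\<in>S. i < j}) =
       (-1) ^ card S' + (if odd (card S') then 1 else 0)" using s1 IH by simp
    then show ?thesis using cS by simp
  qed
qed

context rot begin

definition shortE where "shortE = {({a,b},False) | a b. a \<in> H \<and> b \<in> H \<and> a \<noteq> b \<and> origin \<sigma> a = origin \<sigma> b}"
definition SM where "SM R = {M. M \<subseteq> shortE \<and> (\<forall>k\<in>M. fst k \<subseteq> R) \<and> (\<forall>d\<in>R. \<exists>!k. k \<in> M \<and> d \<in> fst k)}"
definition Ev where "Ev R \<longleftrightarrow> (\<forall>d\<in>R. even (card (R \<inter> orb \<sigma> d)))"

lemma shortE_fin: "finite shortE"
proof -
  have "shortE \<subseteq> (\<lambda>(a,b). ({a,b},False)) ` (H \<times> H)" unfolding shortE_def by auto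
  then show ?thesis using finH finite_subset by blast
qed

lemma SM_fin: "finite (SM R)"
proof -
  have "SM R \<subseteq> Pow shortE" unfolding SM_def by auto
  then show ?thesis using shortE_fin by (meson finite_Pow_iff finite_subset)
qed

lemma same_orb: "a \<in> H \<Longrightarrow> b \<in> H \<Longrightarrow> origin \<sigma> a = origin \<sigma> b \<longleftrightarrow> b \<in> orb \<sigma> a"
  unfolding origin_def using orb_shift orb_self by metis

lemma orb_meet: assumes "a \<in> H" "c \<in> H" "a \<in> orb \<sigma> v" "c \<in> orb \<sigma> v" shows "c \<in> orb \<sigma> a"
proof -
  obtain k j where k: "a = (\<sigma> ^^ k) v" and j: "c = (\<sigma> ^^ j) v" using assms unfolding orb_def by auto
  show ?thesis
  proof (cases "k \<le> j")
    case True
    then have "c = (\<sigma> ^^ (j - k)) a" using k j by (metis funpow_add le_add_diff_inverse2 o_apply)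
    then show ?thesis unfolding orb_def by auto
  next
    case False
    then have "a = (\<sigma> ^^ (k - j)) c" using k j
      by (metis funpow_add le_add_diff_inverse2 o_apply nat_le_linear)
    then have "a \<in> orb \<sigma> c" unfolding orb_def by auto
    then show ?thesis using orb_shift assms orb_self by metis
  qed
qed

lemma shortE_elim: assumes "k \<in> shortE"
  obtains c d where "k = ({c,d},False)" "c \<in> H" "d \<in> H" "c \<noteq> d" "d \<in> orb \<sigma> c"
  using assms same_orb unfolding shortE_def by blast

lemma SM_elem: assumes "M \<in> SM R" "k \<in> M"
  obtains c d where "k = ({c,d},False)" "c \<in> H" "d \<in> H" "c \<noteq> d" "d \<in> orb \<sigma> c" "c \<in> R" "d \<in> R"
proof -
  have "k \<in> shortE" "fst k \<subseteq> R" using assms unfolding SM_def by auto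
  then show ?thesis using that by (elim shortE_elim) auto
qed

lemma SM_empty: "SM {} = {{}}"
proof -
  have "M = {}" if "M \<in> SM {}" for M
  proof (rule ccontr)
    assume "M \<noteq> {}" then obtain k where "k \<in> M" by blast
    then show False using that by (elim SM_elem) auto
  qed
  then show ?thesis unfolding SM_def by auto
qed

lemma kk_shortE: "a \<in> H \<Longrightarrow> b \<in> orb \<sigma> a \<Longrightarrow> b \<noteq> a \<Longrightarrow> ({a,b},False) \<in> shortE"
  unfolding shortE_def using same_orb orb_sub by blast

lemma SM_split: assumes R: "R \<subseteq> H" and a: "a \<in> R"
  shows "SM R = (\<Union>b\<in>R \<inter> orb \<sigma> a - {a}. insert ({a,b},False) ` SM (R - {a,b}))"
proof
  show "(\<Union>b\<in>R \<inter> orb \<sigma> a - {a}. insert ({a,b},False) ` SM (R - {a,b})) \<subseteq> SM R"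
  proof
    fix M assume "M \<in> (\<Union>b\<in>R \<inter> orb \<sigma> a - {a}. insert ({a,b},False) ` SM (R - {a,b}))"
    then obtain b M' where b: "b \<in> R" "b \<in> orb \<sigma> a" "b \<noteq> a" and M': "M' \<in> SM (R - {a,b})"
      and M: "M = insert ({a,b},False) M'" by blast
    have sub: "M' \<subseteq> shortE" "\<forall>k\<in>M'. fst k \<subseteq> R - {a,b}" "\<forall>d\<in>R - {a,b}. \<exists>!k. k \<in> M' \<and> d \<in> fst k"
      using M' unfolding SM_def by auto
    have "({a,b},False) \<in> shortE" using kk_shortE[of a b] a R b by blast
    then have "M \<subseteq> shortE" using M sub(1) by blast
    moreover have "\<forall>k\<in>M. fst k \<subseteq> R"
    proof
      fix k assume "k \<in> M"
      then have "k = ({a,b},False) \<or> k \<in> M'" using M by blast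
      then show "fst k \<subseteq> R"
      proof
        assume "k \<in> M'" then have "fst k \<subseteq> R - {a,b}" using sub(2) by blast
        then show ?thesis by blast
      qed (use a b(1) in simp)
    qed
    moreover have "\<exists>!k. k \<in> M \<and> d \<in> fst k" if d: "d \<in> R" for d
    proof (cases "d \<in> {a,b}")
      case True
      show ?thesis
      proof (rule ex1I[of _ "({a,b},False)"])
        show "({a,b},False) \<in> M \<and> d \<in> fst ({a,b},False)" using M True by auto
        fix k assume "k \<in> M \<and> d \<in> fst k"
        then show "k = ({a,b},False)" using M sub(2) True by blast
      qed
    next
      case False
      then obtain k where k: "k \<in> M'" "d \<in> fst k" "\<And>k'. k' \<in> M' \<Longrightarrow> d \<in> fst k' \<Longrightarrow> k' = k"
        using sub(3) d by blast
      show ?thesis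
      proof (rule ex1I[of _ k])
        show "k \<in> M \<and> d \<in> fst k" using k M by blast
        fix k' assume "k' \<in> M \<and> d \<in> fst k'"
        then have "k' \<noteq> ({a,b},False)" "k' \<in> M" "d \<in> fst k'" using False by auto
        then have "k' \<in> M'" using M by blast
        then show "k' = k" using k(3) \<open>d \<in> fst k'\<close> by blast
      qed
    qed
    ultimately show "M \<in> SM R" unfolding SM_def by auto
  qed
next
  show "SM R \<subseteq> (\<Union>b\<in>R \<inter> orb \<sigma> a - {a}. insert ({a,b},False) ` SM (R - {a,b}))"
  proof
    fix M assume M: "M \<in> SM R"
    have Ms: "M \<subseteq> shortE" "\<forall>k\<in>M. fst k \<subseteq> R" "\<forall>d\<in>R. \<exists>!k. k \<in> M \<and> d \<in> fst k"
      using M unfolding SM_def by auto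
    obtain k where k: "k \<in> M" "a \<in> fst k" "\<And>k'. k' \<in> M \<Longrightarrow> a \<in> fst k' \<Longrightarrow> k' = k"
      using Ms(3) a by blast
    obtain c d where cd: "k = ({c,d},False)" "c \<in> H" "d \<in> H" "c \<noteq> d" "d \<in> orb \<sigma> c" "c \<in> R" "d \<in> R"
      using M k(1) by (elim SM_elem)
    obtain b where b: "k = ({a,b},False)" "b \<in> R" "b \<in> orb \<sigma> a" "b \<noteq> a"
    proof (cases "a = c")
      case True then show ?thesis using cd by (intro that[of d]) auto
    next
      case False
      then have "a = d" using k(2) cd(1) by simp
      moreover have "c \<in> orb \<sigma> d" using cd orb_shift orb_self by metis
      ultimately show ?thesis using cd by (intro that[of c]) (auto simp: insert_commute)
    qed
    define M' where "M' = M - {k}"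
    have "M' \<in> SM (R - {a,b})"
    proof -
      have "M' \<subseteq> shortE" using Ms(1) M'_def by blast
      moreover have "\<forall>k'\<in>M'. fst k' \<subseteq> R - {a,b}"
      proof
        fix k' assume k': "k' \<in> M'"
        have "a \<notin> fst k'" using k(3) k' M'_def by blast
        moreover have "b \<notin> fst k'"
        proof
          assume "b \<in> fst k'"
          moreover have "b \<in> fst k" using b by simp
          ultimately have "k' = k" using Ms(3) b(2) k k' M'_def by blast
          then show False using k' M'_def by auto
        qed
        ultimately show "fst k' \<subseteq> R - {a,b}" using Ms(2) k' M'_def by auto
      qed
      moreover have "\<forall>d\<in>R - {a,b}. \<exists>!k'. k' \<in> M' \<and> d \<in> fst k'"
      proof
        fix e assume e: "e \<in> R - {a,b}"
        then obtain k' where k': "k' \<in> M" "e \<in> fst k'" "\<And>k''. k'' \<in> M \<Longrightarrow> e \<in> fst k'' \<Longrightarrow> k'' = k'"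
          using Ms(3) by blast
        have "k' \<noteq> k" using e k'(2) b(1) by auto
        then show "\<exists>!k'. k' \<in> M' \<and> e \<in> fst k'" using k' M'_def by blast
      qed
      ultimately show ?thesis unfolding SM_def by auto
    qed
    moreover have "M = insert ({a,b},False) M'" using M'_def k(1) b(1) by blast
    ultimately show "M \<in> (\<Union>b\<in>R \<inter> orb \<sigma> a - {a}. insert ({a,b},False) ` SM (R - {a,b}))"
      using b by blast
  qed
qed

lemma cr_iff: assumes R: "R \<subseteq> H" and a: "a \<in> R" and b: "b \<in> R" "b \<in> orb \<sigma> a" "b \<noteq> a"
  and M': "M' \<in> SM (R - {a,b})" and k2: "k2 \<in> M'"
  shows "(Cd \<sigma> ({a,b},False) k2 \<or> Cd \<sigma> k2 ({a,b},False)) \<longleftrightarrow>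
     card (fst k2 \<inter> {c\<in>R \<inter> orb \<sigma> a - {a}. rot_pos \<sigma> a c < rot_pos \<sigma> a b}) = 1"
proof -
  let ?A = "{c\<in>R \<inter> orb \<sigma> a - {a}. rot_pos \<sigma> a c < rot_pos \<sigma> a b}"
  have aH: "a \<in> H" using a R by blast
  obtain c d where cd: "k2 = ({c,d},False)" "c \<in> H" "d \<in> H" "c \<noteq> d" "d \<in> orb \<sigma> c"
     "c \<in> R - {a,b}" "d \<in> R - {a,b}"
    using M' k2 by (elim SM_elem)
  show ?thesis
  proof (cases "c \<in> orb \<sigma> a")
    case True
    have oc: "orb \<sigma> c = orb \<sigma> a" using orb_shift aH True by blast
    then have dO: "d \<in> orb \<sigma> a" using cd by simp
    have dist: "distinct [a,b,c,d]" using cd b by auto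
    have ex: "\<exists>v. {a,b} \<union> {c,d} \<subseteq> origin \<sigma> v"
      using True dO b orb_self unfolding origin_def by (intro exI[of _ a]) auto
    have "Cd \<sigma> ({a,b},False) k2 \<longleftrightarrow> interlace \<sigma> {a,b} {c,d}"
      using ex cd(1) unfolding Cd_def by simp
    moreover have "Cd \<sigma> k2 ({a,b},False) \<longleftrightarrow> interlace \<sigma> {c,d} {a,b}"
      using ex cd(1) unfolding Cd_def by (simp add: Un_commute)
    moreover have "interlace \<sigma> {c,d} {a,b} \<longleftrightarrow> interlace \<sigma> {a,b} {c,d}"
      using interlace_sym[OF aH orb_self b(2) True dO dist] .
    moreover have "interlace \<sigma> {a,b} {c,d} \<longleftrightarrow>
      ((rot_pos \<sigma> a c < rot_pos \<sigma> a b) \<noteq> (rot_pos \<sigma> a d < rot_pos \<sigma> a b))"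
      using interlace_base[OF aH b(2) True dO dist] .
    moreover have "c \<in> ?A \<longleftrightarrow> rot_pos \<sigma> a c < rot_pos \<sigma> a b" using cd True by auto
    moreover have "d \<in> ?A \<longleftrightarrow> rot_pos \<sigma> a d < rot_pos \<sigma> a b" using cd dO by auto
    moreover have "card ({c,d} \<inter> ?A) = 1 \<longleftrightarrow> (c \<in> ?A) \<noteq> (d \<in> ?A)"
    proof -
      have "{c,d} \<inter> ?A = (if c \<in> ?A then {c} else {}) \<union> (if d \<in> ?A then {d} else {})" by auto
      then show ?thesis using cd(4) by (cases "c \<in> ?A"; cases "d \<in> ?A") auto
    qed
    ultimately show ?thesis using cd(1) by simp
  next
    case False
    have oc: "d \<in> orb \<sigma> a \<Longrightarrow> c \<in> orb \<sigma> a"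
    proof -
      assume "d \<in> orb \<sigma> a"
      then have "orb \<sigma> d = orb \<sigma> a" using orb_shift aH by blast
      moreover have "orb \<sigma> d = orb \<sigma> c" using orb_shift cd by blast
      ultimately show ?thesis using orb_self by metis
    qed
    have nA: "fst k2 \<inter> ?A = {}" using False oc cd(1) by auto
    have "\<not> (\<exists>v. {a,b} \<union> {c,d} \<subseteq> origin \<sigma> v)"
    proof
      assume "\<exists>v. {a,b} \<union> {c,d} \<subseteq> origin \<sigma> v"
      then obtain v where "a \<in> orb \<sigma> v" "c \<in> orb \<sigma> v" unfolding origin_def by auto
      then have "c \<in> orb \<sigma> a" using orb_meet aH cd(2) by blast
      then show False using False by blast
    qed
    then have "\<not> Cd \<sigma> ({a,b},False) k2" "\<not> Cd \<sigma> k2 ({a,b},False)"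
      unfolding Cd_def using cd(1) by (auto simp: Un_commute)
    then show ?thesis using nA by simp
  qed
qed

lemma sign_insert: assumes R: "R \<subseteq> H" and a: "a \<in> R" and b: "b \<in> R" "b \<in> orb \<sigma> a" "b \<noteq> a"
  and M': "M' \<in> SM (R - {a,b})"
  shows "(-1::real) ^ t_count \<sigma> (insert ({a,b},False) M') =
    (-1) ^ t_count \<sigma> M' * (-1) ^ card {c\<in>R \<inter> orb \<sigma> a - {a}. rot_pos \<sigma> a c < rot_pos \<sigma> a b}"
proof -
  let ?A = "{c\<in>R \<inter> orb \<sigma> a - {a}. rot_pos \<sigma> a c < rot_pos \<sigma> a b}"
  let ?k = "({a,b},False) :: 'd set \<times> bool"
  let ?cr = "\<lambda>k2. Cd \<sigma> ?k k2 \<or> Cd \<sigma> k2 ?k"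
  have Ms: "M' \<subseteq> shortE" "\<forall>k\<in>M'. fst k \<subseteq> R - {a,b}" "\<forall>d\<in>R - {a,b}. \<exists>!k. k \<in> M' \<and> d \<in> fst k"
    using M' unfolding SM_def by auto
  have finM: "finite M'" using Ms(1) shortE_fin finite_subset by blast
  have kn: "?k \<notin> M'" using Ms(2) by auto
  have t: "t_count \<sigma> (insert ?k M') = t_count \<sigma> M' + card {k2\<in>M'. ?cr k2}"
    unfolding t_count_TT using TT_insert[OF finM kn] .
  have cardA: "card ?A = (\<Sum>k2\<in>M'. card (fst k2 \<inter> ?A))"
  proof -
    have "?A = (\<Union>k2\<in>M'. fst k2 \<inter> ?A)"
    proof
      show "?A \<subseteq> (\<Union>k2\<in>M'. fst k2 \<inter> ?A)"
      proof
        fix c assume c: "c \<in> ?A"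
        then have "c \<in> R - {a,b}" by auto
        then obtain k2 where "k2 \<in> M'" "c \<in> fst k2" using Ms(3) by blast
        then show "c \<in> (\<Union>k2\<in>M'. fst k2 \<inter> ?A)" using c by blast
      qed
    qed blast
    moreover have "card (\<Union>k2\<in>M'. fst k2 \<inter> ?A) = (\<Sum>k2\<in>M'. card (fst k2 \<inter> ?A))"
    proof (rule card_UN_disjoint[OF finM])
      show "\<forall>i\<in>M'. finite (fst i \<inter> ?A)"
      proof
        fix i assume "i \<in> M'"
        then obtain c d where "i = ({c,d},False)" using M' by (elim SM_elem)
        then show "finite (fst i \<inter> ?A)" by simp
      qed
      show "\<forall>i\<in>M'. \<forall>j\<in>M'. i \<noteq> j \<longrightarrow> fst i \<inter> ?A \<inter> (fst j \<inter> ?A) = {}"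
      proof (intro ballI impI)
        fix i j assume ij: "i \<in> M'" "j \<in> M'" "i \<noteq> j"
        show "fst i \<inter> ?A \<inter> (fst j \<inter> ?A) = {}"
        proof (rule ccontr)
          assume "fst i \<inter> ?A \<inter> (fst j \<inter> ?A) \<noteq> {}"
          then obtain e where e: "e \<in> fst i" "e \<in> fst j" by blast
          then have "e \<in> R - {a,b}" using Ms(2) ij by blast
          then show False using Ms(3) ij e by blast
        qed
      qed
    qed
    ultimately show ?thesis by simp
  qed
  have h: "(-1::real) ^ card (fst k2 \<inter> ?A) = (-1) ^ (if ?cr k2 then 1 else 0)" if k2: "k2 \<in> M'" for k2
  proof -
    obtain c d where "k2 = ({c,d},False)" using M' k2 by (elim SM_elem)
    then have "card (fst k2 \<inter> ?A) \<le> card (fst k2)" by (intro card_mono) auto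
    moreover have "card (fst k2) \<le> 2" using \<open>k2 = ({c,d},False)\<close> by (simp add: card_insert_if)
    ultimately have le: "card (fst k2 \<inter> ?A) \<le> 2" by linarith
    have "card (fst k2 \<inter> ?A) = 0 \<or> card (fst k2 \<inter> ?A) = 1 \<or> card (fst k2 \<inter> ?A) = 2" using le by linarith
    then show ?thesis using cr_iff[OF R a b M' k2] by auto
  qed
  have "(-1::real) ^ card ?A = (\<Prod>k2\<in>M'. (-1) ^ card (fst k2 \<inter> ?A))"
    unfolding cardA by (rule power_sum)
  also have "\<dots> = (\<Prod>k2\<in>M'. (-1) ^ (if ?cr k2 then 1 else 0))" using h by (rule prod.cong[OF refl])
  also have "\<dots> = (-1) ^ (\<Sum>k2\<in>M'. (if ?cr k2 then 1 else 0))" by (rule power_sum[symmetric])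
  also have "(\<Sum>k2\<in>M'. (if ?cr k2 then 1 else 0)) = card {k2\<in>M'. ?cr k2}"
    using finM by (simp add: sum.If_cases Int_def conj_commute)
  finally show ?thesis unfolding t by (simp add: power_add)
qed

lemma par_remove: assumes R: "R \<subseteq> H" and a: "a \<in> R" and b: "b \<in> R" "b \<in> orb \<sigma> a" "b \<noteq> a"
  and d: "d \<in> H"
  shows "even (card ((R - {a,b}) \<inter> orb \<sigma> d)) \<longleftrightarrow> even (card (R \<inter> orb \<sigma> d))"
proof -
  have aH: "a \<in> H" using a R by blast
  have fin: "finite (R \<inter> orb \<sigma> d)" using finH R finite_subset by blast
  have eq: "(R - {a,b}) \<inter> orb \<sigma> d = R \<inter> orb \<sigma> d - {a,b}" by blast
  show ?thesis
  proof (cases "d \<in> orb \<sigma> a")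
    case True
    then have "orb \<sigma> d = orb \<sigma> a" using orb_shift aH by blast
    then have sub: "{a,b} \<subseteq> R \<inter> orb \<sigma> d" using a b orb_self by auto
    then have "card (R \<inter> orb \<sigma> d - {a,b}) = card (R \<inter> orb \<sigma> d) - 2"
      using card_Diff_subset[OF _ sub] fin b(3) by simp
    moreover have "card (R \<inter> orb \<sigma> d) \<ge> 2"
      using card_mono[OF fin sub] b(3) by simp
    ultimately show ?thesis unfolding eq by auto
  next
    case False
    have "a \<notin> orb \<sigma> d"
    proof
      assume "a \<in> orb \<sigma> d" then have "orb \<sigma> a = orb \<sigma> d" using orb_shift d by blast
      then show False using False orb_self by metis
    qed
    moreover have "b \<notin> orb \<sigma> d"
    proof
      assume "b \<in> orb \<sigma> d" then have "orb \<sigma> b = orb \<sigma> d" using orb_shift d by blast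
      moreover have "orb \<sigma> b = orb \<sigma> a" using orb_shift aH b by blast
      ultimately show False using False orb_self by metis
    qed
    ultimately have "R \<inter> orb \<sigma> d - {a,b} = R \<inter> orb \<sigma> d" by blast
    then show ?thesis unfolding eq by simp
  qed
qed

lemma Ev_remove: assumes R: "R \<subseteq> H" and a: "a \<in> R" and b: "b \<in> R" "b \<in> orb \<sigma> a" "b \<noteq> a"
  shows "Ev (R - {a,b}) \<longleftrightarrow> Ev R"
proof
  assume E: "Ev R"
  show "Ev (R - {a,b})" unfolding Ev_def
  proof
    fix d assume "d \<in> R - {a,b}"
    then show "even (card ((R - {a,b}) \<inter> orb \<sigma> d))"
      using par_remove[OF R a b] E R unfolding Ev_def by blast
  qed
next
  assume E: "Ev (R - {a,b})"
  have aH: "a \<in> H" using a R by blast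
  show "Ev R" unfolding Ev_def
  proof
    fix d assume d: "d \<in> R"
    have dH: "d \<in> H" using d R by blast
    show "even (card (R \<inter> orb \<sigma> d))"
    proof (cases "d \<in> R - {a,b}")
      case True then show ?thesis using par_remove[OF R a b dH] E unfolding Ev_def by blast
    next
      case False
      then have "d \<in> orb \<sigma> a" using d b orb_self by auto
      then have od: "orb \<sigma> d = orb \<sigma> a" using orb_shift aH by blast
      show ?thesis
      proof (cases "(R - {a,b}) \<inter> orb \<sigma> a = {}")
        case True
        then show ?thesis using par_remove[OF R a b dH] od by simp
      next
        case False
        then obtain e where e: "e \<in> R - {a,b}" "e \<in> orb \<sigma> a" by blast
        then have "orb \<sigma> e = orb \<sigma> a" using orb_shift aH by blast
        moreover have "even (card ((R - {a,b}) \<inter> orb \<sigma> e))" using E e unfolding Ev_def by blast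
        ultimately show ?thesis using par_remove[OF R a b dH] od by simp
      qed
    qed
  qed
qed

lemma alt_transfer: assumes a: "a \<in> H" and B: "B \<subseteq> orb \<sigma> a" "finite B"
  shows "(\<Sum>b\<in>B. (-1::real) ^ card {c\<in>B. rot_pos \<sigma> a c < rot_pos \<sigma> a b}) = (if odd (card B) then 1 else 0)"
proof -
  let ?P = "rot_pos \<sigma> a"
  have inj: "inj_on ?P B" using inj_on_subset[OF rot_pos_inj[OF a] B(1)] .
  have cc: "\<And>b. b \<in> B \<Longrightarrow> card {c\<in>B. ?P c < ?P b} = card {i\<in>?P ` B. i < ?P b}"
  proof -
    fix b assume "b \<in> B"
    have e1: "{i\<in>?P ` B. i < ?P b} = ?P ` {c\<in>B. ?P c < ?P b}" by auto
    have e2: "inj_on ?P {c\<in>B. ?P c < ?P b}" by (rule inj_on_subset[OF inj]) auto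
    show "card {c\<in>B. ?P c < ?P b} = card {i\<in>?P ` B. i < ?P b}" unfolding e1 using card_image[OF e2] by simp
  qed
  have "(\<Sum>b\<in>B. (-1::real) ^ card {c\<in>B. ?P c < ?P b}) = (\<Sum>b\<in>B. (-1::real) ^ card {i\<in>?P ` B. i < ?P b})"
    by (intro sum.cong refl) (simp only: cc)
  also have "\<dots> = (\<Sum>j\<in>?P ` B. (-1::real) ^ card {i\<in>?P ` B. i < j})"
    using sum.reindex[OF inj, of "\<lambda>j. (-1::real) ^ card {i\<in>?P ` B. i < j}"] by simp
  also have "\<dots> = (if odd (card (?P ` B)) then 1 else 0)" using alt_sum[of "?P ` B"] B(2) by simp
  finally show ?thesis using card_image[OF inj] by simp
qed

lemma SM_sum: "R \<subseteq> H \<Longrightarrow> (\<Sum>M\<in>SM R. (-1::real) ^ t_count \<sigma> M) = (if Ev R then 1 else 0)"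
proof (induction "card R" arbitrary: R rule: less_induct)
  case less
  note R = less.prems
  show ?case
  proof (cases "R = {}")
    case True
    have "TT \<sigma> {} = {}" unfolding TT_def by auto
    then show ?thesis using True SM_empty by (simp add: t_count_TT Ev_def)
  next
    case False
    then obtain a where a: "a \<in> R" by blast
    have aH: "a \<in> H" using a R by blast
    define B where "B = R \<inter> orb \<sigma> a - {a}"
    have finR: "finite R" using R finH finite_subset by blast
    have finB: "finite B" using finR B_def by simp
    let ?f = "\<lambda>M. (-1::real) ^ t_count \<sigma> M"
    let ?s = "\<lambda>b. (-1::real) ^ card {c\<in>B. rot_pos \<sigma> a c < rot_pos \<sigma> a b}"
    have bprops: "b \<in> R" "b \<in> orb \<sigma> a" "b \<noteq> a" if "b \<in> B" for b using that B_def by auto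
    have "(\<Sum>M\<in>SM R. ?f M) = (\<Sum>b\<in>B. \<Sum>M\<in>insert ({a,b},False) ` SM (R - {a,b}). ?f M)"
      unfolding SM_split[OF R a] B_def[symmetric]
    proof (rule sum.UNION_disjoint[OF finB])
      show "\<forall>b\<in>B. finite (insert ({a,b},False) ` SM (R - {a,b}))" using SM_fin by blast
      show "\<forall>b\<in>B. \<forall>b'\<in>B. b \<noteq> b' \<longrightarrow>
         insert ({a,b},False) ` SM (R - {a,b}) \<inter> insert ({a,b'},False) ` SM (R - {a,b'}) = {}"
      proof (intro ballI impI)
        fix b b' assume bb: "b \<in> B" "b' \<in> B" "b \<noteq> b'"
        show "insert ({a,b},False) ` SM (R - {a,b}) \<inter> insert ({a,b'},False) ` SM (R - {a,b'}) = {}"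
        proof (rule ccontr)
          assume "insert ({a,b},False) ` SM (R - {a,b}) \<inter> insert ({a,b'},False) ` SM (R - {a,b'}) \<noteq> {}"
          then obtain M where M1: "M \<in> insert ({a,b},False) ` SM (R - {a,b})"
            and M2: "M \<in> insert ({a,b'},False) ` SM (R - {a,b'})" by blast
          have "M \<in> (\<Union>b\<in>R \<inter> orb \<sigma> a - {a}. insert ({a,b},False) ` SM (R - {a,b}))"
          proof (rule UN_I[of b])
            show "b \<in> R \<inter> orb \<sigma> a - {a}" using bb(1) unfolding B_def .
          qed (rule M1)
          then have "M \<in> SM R" unfolding SM_split[OF R a] .
          then have u: "\<exists>!k. k \<in> M \<and> a \<in> fst k" using a unfolding SM_def by blast
          obtain N1 where "M = insert ({a,b},False) N1" using M1 by blast
          then have i1: "({a,b},False) \<in> M" by simp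
          obtain N2 where "M = insert ({a,b'},False) N2" using M2 by blast
          then have i2: "({a,b'},False) \<in> M" by simp
          note i1 i2
          then have "({a,b},False) = (({a,b'},False) :: 'd set \<times> bool)" using u by (metis fst_conv insertI1)
          then have "{a,b} = {a,b'}" by simp
          then show False using bb(3) bprops[OF bb(1)] by (simp add: doubleton_eq_iff)
        qed
      qed
    qed
    also have "\<dots> = (\<Sum>b\<in>B. \<Sum>M'\<in>SM (R - {a,b}). ?f (insert ({a,b},False) M'))"
    proof (rule sum.cong[OF refl])
      fix b assume b: "b \<in> B"
      have "inj_on (insert ({a,b},False)) (SM (R - {a,b}))"
      proof (rule inj_onI)
        fix M1 M2 assume M: "M1 \<in> SM (R - {a,b})" "M2 \<in> SM (R - {a,b})"
          "insert ({a,b},False) M1 = insert ({a,b},False) M2"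
        have n1: "({a,b},False) \<notin> M1" using M(1) unfolding SM_def by auto
        have n2: "({a,b},False) \<notin> M2" using M(2) unfolding SM_def by auto
        show "M1 = M2" using M(3) insert_ident[OF n1 n2] by simp
      qed
      then show "(\<Sum>M\<in>insert ({a,b},False) ` SM (R - {a,b}). ?f M) =
          (\<Sum>M'\<in>SM (R - {a,b}). ?f (insert ({a,b},False) M'))" by (rule sum.reindex_cong) auto
    qed
    also have "\<dots> = (\<Sum>b\<in>B. ?s b * (if Ev R then 1 else 0))"
    proof (rule sum.cong[OF refl])
      fix b assume b: "b \<in> B"
      have sub: "R - {a,b} \<subseteq> H" using R by blast
      have lt: "card (R - {a,b}) < card R" using finR a bprops[OF b]
        by (intro psubset_card_mono) auto
      have "(\<Sum>M'\<in>SM (R - {a,b}). ?f (insert ({a,b},False) M')) =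
          (\<Sum>M'\<in>SM (R - {a,b}). ?f M' * ?s b)"
        by (rule sum.cong[OF refl]) (use sign_insert[OF R a bprops[OF b]] in \<open>simp add: B_def\<close>)
      also have "\<dots> = (\<Sum>M'\<in>SM (R - {a,b}). ?f M') * ?s b" by (simp add: sum_distrib_right)
      also have "\<dots> = (if Ev (R - {a,b}) then 1 else 0) * ?s b" using less(1)[OF lt sub] by simp
      also have "\<dots> = ?s b * (if Ev R then 1 else 0)" using Ev_remove[OF R a bprops[OF b]] by simp
      finally show "(\<Sum>M'\<in>SM (R - {a,b}). ?f (insert ({a,b},False) M')) = ?s b * (if Ev R then 1 else 0)" .
    qed
    also have "\<dots> = (\<Sum>b\<in>B. ?s b) * (if Ev R then 1 else 0)" by (simp add: sum_distrib_right)
    also have "(\<Sum>b\<in>B. ?s b) = (if odd (card B) then 1 else 0)"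
    proof -
      have "B \<subseteq> orb \<sigma> a" unfolding B_def by blast
      from alt_transfer[OF aH this finB] show ?thesis .
    qed
    also have "(if odd (card B) then 1 else 0) * (if Ev R then 1 else 0) = (if Ev R then (1::real) else 0)"
    proof (cases "Ev R")
      case True
      then have "even (card (R \<inter> orb \<sigma> a))" using a unfolding Ev_def by blast
      moreover have "card (R \<inter> orb \<sigma> a) = Suc (card B)"
        using card_Suc_Diff1[of "R \<inter> orb \<sigma> a" a] finR a orb_self B_def by simp
      ultimately show ?thesis using True by simp
    qed simp
    finally show ?thesis .
  qed
qed

end



lemma sqrt_prod: "sqrt (prod f A) = (\<Prod>a\<in>A. sqrt (f a))"
  by (induction A rule: infinite_finite_induct) (auto simp: real_sqrt_mult)

locale kmap = rot H \<sigma> for H :: "'d set" and \<sigma> +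
  fixes \<alpha> :: "'d \<Rightarrow> 'd"
  assumes inv: "\<forall>d\<in>H. \<alpha> d \<in> H \<and> \<alpha> (\<alpha> d) = d \<and> \<alpha> d \<noteq> d"
begin

abbreviation "E \<equiv> map_edges H \<alpha>"
definition Long :: "'d set set \<Rightarrow> ('d set \<times> bool) set" where "Long L = (\<lambda>e. (e, True)) ` L"
definition Rr where "Rr L = {d\<in>H. edge_of \<alpha> d \<notin> L}"

lemma edge_in: "d \<in> H \<Longrightarrow> edge_of \<alpha> d \<in> E"
  unfolding map_edges_def by blast

lemma edge_eq: assumes "e \<in> E" "d \<in> e" shows "e = edge_of \<alpha> d"
proof -
  obtain d0 where d0: "d0 \<in> H" "e = {d0, \<alpha> d0}" using assms(1) unfolding map_edges_def edge_of_def by blast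
  then show ?thesis using assms(2) inv unfolding edge_of_def by auto
qed

lemma edge_sub: "e \<in> E \<Longrightarrow> e \<subseteq> H"
  using inv unfolding map_edges_def edge_of_def by auto

lemma edge_card: assumes "e \<in> E" shows "card e = 2"
proof -
  obtain d0 where d0: "d0 \<in> H" "e = {d0, \<alpha> d0}" using assms(1) unfolding map_edges_def edge_of_def by blast
  then show ?thesis using inv by auto
qed

lemma finE: "finite E" unfolding map_edges_def using finH by simp

lemma K_decomp: "K_matchings H \<alpha> \<sigma> = (\<lambda>(L,M). Long L \<union> M) ` (SIGMA L:Pow E. SM (Rr L))"
proof
  show "K_matchings H \<alpha> \<sigma> \<subseteq> (\<lambda>(L,M). Long L \<union> M) ` (SIGMA L:Pow E. SM (Rr L))"
  proof
    fix D assume D: "D \<in> K_matchings H \<alpha> \<sigma>"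
    have DK: "D \<subseteq> K_edges H \<alpha> \<sigma>" and Du: "\<forall>d\<in>H. \<exists>!k. k \<in> D \<and> d \<in> fst k"
      using D unfolding K_matchings_def by auto
    define L where "L = {fst k | k. k \<in> D \<and> snd k}"
    define M where "M = {k \<in> D. \<not> snd k}"
    have KE: "K_edges H \<alpha> \<sigma> = Long E \<union> shortE"
      unfolding K_edges_def Long_def shortE_def map_edges_def by auto
    have LE: "L \<subseteq> E" using DK unfolding KE L_def Long_def shortE_def by auto
    have DLM: "D = Long L \<union> M"
    proof
      show "D \<subseteq> Long L \<union> M"
      proof
        fix k assume "k \<in> D"
        then show "k \<in> Long L \<union> M" unfolding L_def M_def Long_def
          by (cases k) (auto intro!: image_eqI)
      qed
      show "Long L \<union> M \<subseteq> D" unfolding L_def M_def Long_def by (auto intro: prod_eqI)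
    qed
    have "M \<in> SM (Rr L)"
    proof -
      have "M \<subseteq> shortE" using DK unfolding KE M_def Long_def by auto
      moreover have "\<forall>k\<in>M. fst k \<subseteq> Rr L"
      proof (intro ballI subsetI)
        fix k d assume k: "k \<in> M" and d: "d \<in> fst k"
        have kS: "k \<in> shortE" using k \<open>M \<subseteq> shortE\<close> by blast
        then obtain c c' where cc: "k = ({c,c'},False)" "c \<in> H" "c' \<in> H" by (elim shortE_elim)
        then have dH: "d \<in> H" using d by auto
        have "edge_of \<alpha> d \<notin> L"
        proof
          assume "edge_of \<alpha> d \<in> L"
          then obtain k' where k': "k' \<in> D" "snd k'" "fst k' = edge_of \<alpha> d" unfolding L_def by blast
          have "d \<in> fst k'" using k' unfolding edge_of_def by auto
          moreover have "k \<in> D" "d \<in> fst k" using k d unfolding M_def by auto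
          ultimately have "k = k'" using Du dH k'(1) by blast
          then show False using k k' unfolding M_def by auto
        qed
        then show "d \<in> Rr L" using dH unfolding Rr_def by blast
      qed
      moreover have "\<forall>d\<in>Rr L. \<exists>!k. k \<in> M \<and> d \<in> fst k"
      proof
        fix d assume d: "d \<in> Rr L"
        then have dH: "d \<in> H" unfolding Rr_def by blast
        obtain k where k: "k \<in> D" "d \<in> fst k" "\<And>k'. k' \<in> D \<Longrightarrow> d \<in> fst k' \<Longrightarrow> k' = k"
          using Du dH by blast
        have "\<not> snd k"
        proof
          assume s: "snd k"
          then have "fst k \<in> L" using k unfolding L_def by blast
          moreover have "fst k \<in> E" using LE calculation by blast
          ultimately have "edge_of \<alpha> d \<in> L" using edge_eq k(2) by metis
          then show False using d unfolding Rr_def by blast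
        qed
        then have "k \<in> M" using k unfolding M_def by blast
        then show "\<exists>!k. k \<in> M \<and> d \<in> fst k" using k unfolding M_def by blast
      qed
      ultimately show ?thesis unfolding SM_def by blast
    qed
    then show "D \<in> (\<lambda>(L,M). Long L \<union> M) ` (SIGMA L:Pow E. SM (Rr L))"
      using LE DLM by (intro image_eqI[of _ _ "(L,M)"]) auto
  qed
next
  show "(\<lambda>(L,M). Long L \<union> M) ` (SIGMA L:Pow E. SM (Rr L)) \<subseteq> K_matchings H \<alpha> \<sigma>"
  proof
    fix D assume "D \<in> (\<lambda>(L,M). Long L \<union> M) ` (SIGMA L:Pow E. SM (Rr L))"
    then obtain L M where LM: "L \<subseteq> E" "M \<in> SM (Rr L)" and D: "D = Long L \<union> M" by auto
    have Ms: "M \<subseteq> shortE" "\<forall>k\<in>M. fst k \<subseteq> Rr L" "\<forall>d\<in>Rr L. \<exists>!k. k \<in> M \<and> d \<in> fst k"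
      using LM(2) unfolding SM_def by auto
    have KE: "K_edges H \<alpha> \<sigma> = Long E \<union> shortE"
      unfolding K_edges_def Long_def shortE_def map_edges_def by auto
    have "D \<subseteq> K_edges H \<alpha> \<sigma>" unfolding KE D using LM(1) Ms(1) unfolding Long_def by blast
    moreover have "\<exists>!k. k \<in> D \<and> d \<in> fst k" if dH: "d \<in> H" for d
    proof (cases "edge_of \<alpha> d \<in> L")
      case True
      show ?thesis
      proof (rule ex1I[of _ "(edge_of \<alpha> d, True)"])
        show "(edge_of \<alpha> d, True) \<in> D \<and> d \<in> fst (edge_of \<alpha> d, True)"
          using True unfolding D Long_def edge_of_def by auto
        fix k assume k: "k \<in> D \<and> d \<in> fst k"
        show "k = (edge_of \<alpha> d, True)"
        proof (cases "k \<in> M")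
          case True
          then have "d \<in> Rr L" using Ms(2) k by blast
          then show ?thesis using \<open>edge_of \<alpha> d \<in> L\<close> unfolding Rr_def by blast
        next
          case False
          then obtain e where e: "k = (e, True)" "e \<in> L" using k unfolding D Long_def by blast
          then have "e = edge_of \<alpha> d" using edge_eq LM(1) k by auto
          then show ?thesis using e by simp
        qed
      qed
    next
      case False
      then have dR: "d \<in> Rr L" using dH unfolding Rr_def by blast
      then obtain k where k: "k \<in> M" "d \<in> fst k" "\<And>k'. k' \<in> M \<Longrightarrow> d \<in> fst k' \<Longrightarrow> k' = k"
        using Ms(3) by blast
      show ?thesis
      proof (rule ex1I[of _ k])
        show "k \<in> D \<and> d \<in> fst k" using k unfolding D by blast
        fix k' assume k': "k' \<in> D \<and> d \<in> fst k'"
        show "k' = k"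
        proof (cases "k' \<in> M")
          case True then show ?thesis using k k' by blast
        next
          case f: False
          then obtain e where e: "k' = (e, True)" "e \<in> L" using k' unfolding D Long_def by blast
          then have "e = edge_of \<alpha> d" using edge_eq LM(1) k' by auto
          then show ?thesis using e False by simp
        qed
      qed
    qed
    ultimately show "D \<in> K_matchings H \<alpha> \<sigma>" unfolding K_matchings_def by blast
  qed
qed

lemma SM_snd: "M \<in> SM R \<Longrightarrow> k \<in> M \<Longrightarrow> \<not> snd k"
  by (elim SM_elem) auto

lemma K_inj: "inj_on (\<lambda>(L,M). Long L \<union> M) (SIGMA L:Pow E. SM (Rr L))"
proof (rule inj_onI, clarify)
  fix L M L' M' assume a: "L \<subseteq> E" "M \<in> SM (Rr L)" "L' \<subseteq> E" "M' \<in> SM (Rr L')"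
    "Long L \<union> M = Long L' \<union> M'"
  have h1: "\<And>A N. N \<in> SM (Rr A) \<Longrightarrow> {k \<in> Long A \<union> N. snd k} = Long A"
    using SM_snd unfolding Long_def by fastforce
  have h2: "\<And>A N. N \<in> SM (Rr A) \<Longrightarrow> {k \<in> Long A \<union> N. \<not> snd k} = N"
    using SM_snd unfolding Long_def by fastforce
  have "Long L = Long L'" using h1[OF a(2)] h1[OF a(4)] a(5) by simp
  moreover have "M = M'" using h2[OF a(2)] h2[OF a(4)] a(5) by simp
  moreover have "inj (\<lambda>e. (e, True))" by (auto simp: inj_def)
  ultimately show "L = L' \<and> M = M'" unfolding Long_def by (metis inj_image_eq_iff)
qed

lemma SM_part: assumes "M \<in> SM R"
  shows "(\<Union>k\<in>M. fst k) = R" "\<forall>k\<in>M. \<forall>k'\<in>M. k \<noteq> k' \<longrightarrow> fst k \<inter> fst k' = {}"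
    "\<forall>k\<in>M. finite (fst k)" "finite M"
proof -
  have Ms: "M \<subseteq> shortE" "\<forall>k\<in>M. fst k \<subseteq> R" "\<forall>d\<in>R. \<exists>!k. k \<in> M \<and> d \<in> fst k"
    using assms unfolding SM_def by auto
  show "(\<Union>k\<in>M. fst k) = R"
  proof
    show "(\<Union>k\<in>M. fst k) \<subseteq> R" using Ms(2) by blast
    show "R \<subseteq> (\<Union>k\<in>M. fst k)"
    proof
      fix d assume "d \<in> R"
      then have "\<exists>k. k \<in> M \<and> d \<in> fst k" using Ms(3) by (meson ex1_implies_ex)
      then show "d \<in> (\<Union>k\<in>M. fst k)" by blast
    qed
  qed
  show "\<forall>k\<in>M. \<forall>k'\<in>M. k \<noteq> k' \<longrightarrow> fst k \<inter> fst k' = {}"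
  proof (intro ballI impI)
    fix k k' assume kk: "k \<in> M" "k' \<in> M" "k \<noteq> k'"
    show "fst k \<inter> fst k' = {}"
    proof (rule ccontr)
      assume "fst k \<inter> fst k' \<noteq> {}"
      then obtain d where d: "d \<in> fst k" "d \<in> fst k'" by blast
      then have "d \<in> R" using Ms(2) kk by blast
      then show False using Ms(3) kk d by blast
    qed
  qed
  show "\<forall>k\<in>M. finite (fst k)"
  proof
    fix k assume "k \<in> M"
    then obtain c d where "k = ({c,d},False)" using assms by (elim SM_elem)
    then show "finite (fst k)" by simp
  qed
  show "finite M" using Ms(1) shortE_fin finite_subset by blast
qed

lemma t_LM: "t_count \<sigma> (Long L \<union> M) = t_count \<sigma> M"
proof -
  have sL: "\<And>k. k \<in> Long L \<Longrightarrow> snd k" unfolding Long_def by auto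
  have "TT \<sigma> (Long L \<union> M) = TT \<sigma> M"
  proof
    show "TT \<sigma> (Long L \<union> M) \<subseteq> TT \<sigma> M"
    proof
      fix x assume "x \<in> TT \<sigma> (Long L \<union> M)"
      then obtain k1 k2 where x: "x = {k1,k2}" "k1 \<in> Long L \<union> M" "k2 \<in> Long L \<union> M" "k1 \<noteq> k2" "Cd \<sigma> k1 k2"
        unfolding TT_def by blast
      have "\<not> snd k1" "\<not> snd k2" using x(5) unfolding Cd_def by auto
      then have "k1 \<in> M" "k2 \<in> M" using x(2,3) sL by blast+
      then show "x \<in> TT \<sigma> M" unfolding TT_def using x by blast
    qed
    show "TT \<sigma> M \<subseteq> TT \<sigma> (Long L \<union> M)" unfolding TT_def by blast
  qed
  then show ?thesis by (simp add: t_count_TT)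
qed

lemma kd_LM: assumes "M \<in> SM R" shows "kappa_dot_D \<kappa> (Long L \<union> M) = card (L \<inter> \<kappa>)"
proof -
  have "{k \<in> Long L \<union> M. snd k \<and> dual_edge (fst k) \<in> \<kappa>} = Long (L \<inter> \<kappa>)"
    using SM_snd[OF assms] unfolding Long_def dual_edge_def by fastforce
  moreover have "inj_on (\<lambda>e. (e, True)) (L \<inter> \<kappa>)" by (auto simp: inj_on_def)
  ultimately show ?thesis unfolding kappa_dot_D_def Long_def by (simp add: card_image)
qed

lemma w_LM: assumes L: "L \<subseteq> E" and M: "M \<in> SM (Rr L)"
  shows "(\<Prod>k\<in>Long L \<union> M. K_weight \<alpha> x k) = (\<Prod>d\<in>Rr L. sqrt (x (edge_of \<alpha> d)))"
proof -
  note P = SM_part[OF M]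
  have finL: "finite (Long L)" unfolding Long_def using finE L finite_subset by blast
  have ns: "\<forall>k\<in>M. \<not> snd k" using SM_snd[OF M] by blast
  have dis: "Long L \<inter> M = {}" unfolding Long_def using ns by auto
  have "(\<Prod>k\<in>Long L \<union> M. K_weight \<alpha> x k) = (\<Prod>k\<in>Long L. K_weight \<alpha> x k) * (\<Prod>k\<in>M. K_weight \<alpha> x k)"
    by (rule prod.union_disjoint[OF finL P(4) dis])
  also have "(\<Prod>k\<in>Long L. K_weight \<alpha> x k) = 1" unfolding Long_def K_weight_def
    by (rule prod.neutral) auto
  also have "(\<Prod>k\<in>M. K_weight \<alpha> x k) = (\<Prod>k\<in>M. \<Prod>d\<in>fst k. sqrt (x (edge_of \<alpha> d)))"
    using SM_snd[OF M] unfolding K_weight_def by (intro prod.cong refl) (simp add: sqrt_prod)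
  also have "\<dots> = (\<Prod>d\<in>(\<Union>k\<in>M. fst k). sqrt (x (edge_of \<alpha> d)))"
    by (rule prod.UNION_disjoint[symmetric]) (use P in auto)
  also have "\<dots> = (\<Prod>d\<in>Rr L. sqrt (x (edge_of \<alpha> d)))" using P(1) by simp
  finally show ?thesis by simp
qed

lemma Rr_comp: "P \<subseteq> E \<Longrightarrow> Rr (E - P) = {d\<in>H. edge_of \<alpha> d \<in> P}"
  unfolding Rr_def using edge_in by blast

lemma W_comp: assumes P: "P \<subseteq> E" and x: "\<forall>e\<in>E. 0 \<le> x e"
  shows "(\<Prod>d\<in>{d\<in>H. edge_of \<alpha> d \<in> P}. sqrt (x (edge_of \<alpha> d))) = (\<Prod>e\<in>P. x e)"
proof -
  let ?S = "{d\<in>H. edge_of \<alpha> d \<in> P}"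
  have finP: "finite P" using finE P finite_subset by blast
  have "(\<Prod>d\<in>?S. sqrt (x (edge_of \<alpha> d))) = (\<Prod>e\<in>P. \<Prod>d\<in>{d\<in>?S. edge_of \<alpha> d = e}. sqrt (x (edge_of \<alpha> d)))"
    by (rule prod.group[symmetric]) (use finH finP in auto)
  also have "\<dots> = (\<Prod>e\<in>P. x e)"
  proof (rule prod.cong[OF refl])
    fix e assume e: "e \<in> P"
    then have eE: "e \<in> E" using P by blast
    have "{d\<in>?S. edge_of \<alpha> d = e} = e"
    proof
      show "{d\<in>?S. edge_of \<alpha> d = e} \<subseteq> e" unfolding edge_of_def by auto
      show "e \<subseteq> {d\<in>?S. edge_of \<alpha> d = e}" using edge_eq[OF eE] edge_sub[OF eE] e by auto
    qed
    then have "(\<Prod>d\<in>{d\<in>?S. edge_of \<alpha> d = e}. sqrt (x (edge_of \<alpha> d))) = (\<Prod>d\<in>e. sqrt (x (edge_of \<alpha> d)))"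
      by (simp only:)
    also have "\<dots> = (\<Prod>d\<in>e. sqrt (x e))"
      by (rule prod.cong[OF refl]) (use edge_eq[OF eE] in metis)
    also have "\<dots> = sqrt (x e) ^ 2" using edge_card[OF eE] by simp
    also have "\<dots> = x e" using x eE by simp
    finally show "(\<Prod>d\<in>{d\<in>?S. edge_of \<alpha> d = e}. sqrt (x (edge_of \<alpha> d))) = x e" .
  qed
  finally show ?thesis .
qed

lemma Ev_comp: assumes P: "P \<subseteq> E"
  shows "Ev {d\<in>H. edge_of \<alpha> d \<in> P} \<longleftrightarrow> (\<forall>v\<in>map_verts H \<sigma>. even (card {d\<in>v. edge_of \<alpha> d \<in> P}))"
proof -
  let ?R = "{d\<in>H. edge_of \<alpha> d \<in> P}"
  have eq: "{d\<in>orb \<sigma> d0. edge_of \<alpha> d \<in> P} = ?R \<inter> orb \<sigma> d0" if "d0 \<in> H" for d0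
    using orb_sub[OF that] by blast
  show ?thesis
  proof
    assume Ev: "Ev ?R"
    show "\<forall>v\<in>map_verts H \<sigma>. even (card {d\<in>v. edge_of \<alpha> d \<in> P})"
    proof
      fix v assume "v \<in> map_verts H \<sigma>"
      then obtain d0 where d0: "d0 \<in> H" "v = orb \<sigma> d0" unfolding map_verts_def origin_def by blast
      show "even (card {d\<in>v. edge_of \<alpha> d \<in> P})"
      proof (cases "?R \<inter> orb \<sigma> d0 = {}")
        case True then show ?thesis unfolding d0(2) eq[OF d0(1)] True by simp
      next
        case False
        then obtain d' where d': "d' \<in> ?R" "d' \<in> orb \<sigma> d0" by blast
        then have "orb \<sigma> d' = orb \<sigma> d0" using orb_shift d0(1) by blast
        moreover have "even (card (?R \<inter> orb \<sigma> d'))" using Ev d'(1) unfolding Ev_def by blast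
        ultimately show ?thesis unfolding d0(2) eq[OF d0(1)] by simp
      qed
    qed
  next
    assume A: "\<forall>v\<in>map_verts H \<sigma>. even (card {d\<in>v. edge_of \<alpha> d \<in> P})"
    show "Ev ?R" unfolding Ev_def
    proof
      fix d assume d: "d \<in> ?R"
      then have "orb \<sigma> d \<in> map_verts H \<sigma>" unfolding map_verts_def origin_def by blast
      then show "even (card (?R \<inter> orb \<sigma> d))" using A eq d by fastforce
    qed
  qed
qed

lemma sign_comp: assumes "\<kappa> \<subseteq> E" "P \<subseteq> E"
  shows "(-1::real) ^ card \<kappa> * (-1) ^ card ((E - P) \<inter> \<kappa>) = (-1) ^ card (P \<inter> \<kappa>)"
proof -
  have fk: "finite \<kappa>" using assms finE finite_subset by blast
  have e: "\<kappa> = ((E - P) \<inter> \<kappa>) \<union> (P \<inter> \<kappa>)" using assms by blast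
  have "card (((E - P) \<inter> \<kappa>) \<union> (P \<inter> \<kappa>)) = card ((E - P) \<inter> \<kappa>) + card (P \<inter> \<kappa>)"
    by (rule card_Un_disjoint) (use fk in auto)
  moreover have "card \<kappa> = card (((E - P) \<inter> \<kappa>) \<union> (P \<inter> \<kappa>))" using arg_cong[OF e, of card] .
  ultimately have c: "card \<kappa> = card ((E - P) \<inter> \<kappa>) + card (P \<inter> \<kappa>)" by simp
  have sq: "(-1::real) ^ card ((E - P) \<inter> \<kappa>) * (-1) ^ card ((E - P) \<inter> \<kappa>) = 1"
    by (simp flip: power_mult_distrib)
  have "(-1::real) ^ card \<kappa> * (-1) ^ card ((E - P) \<inter> \<kappa>) =
     ((-1) ^ card ((E - P) \<inter> \<kappa>) * (-1) ^ card ((E - P) \<inter> \<kappa>)) * (-1) ^ card (P \<inter> \<kappa>)"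
    unfolding c power_add by (simp only: mult_ac)
  then show ?thesis by (simp only: sq mult_1)
qed

end



theorem lemma2p3:
  fixes H :: "'d set" and \<alpha> \<sigma> :: "'d \<Rightarrow> 'd"
    and x :: "'d set \<Rightarrow> real" and \<kappa> :: "'d set set"
  assumes "planar_map H \<alpha> \<sigma>"
    and "\<forall>e\<in>map_edges H \<alpha>. 0 \<le> x e"
    and "\<kappa> \<subseteq> dual_edges H \<alpha> \<sigma>"
  shows "(\<Sum>P\<in>even_subgraphs H \<alpha> \<sigma>. (-1) ^ kappa_dot_P \<kappa> P * (\<Prod>e\<in>P. x e))
       = (-1) ^ card \<kappa> * (\<Sum>D\<in>K_matchings H \<alpha> \<sigma>.
            (-1) ^ t_count \<sigma> D * (-1) ^ kappa_dot_D \<kappa> D * (\<Prod>k\<in>D. K_weight \<alpha> x k))"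
proof -
  have cm: "comb_map H \<alpha> \<sigma>" using assms(1) unfolding planar_map_def by blast
  then interpret kmap H \<sigma> \<alpha> unfolding comb_map_def by unfold_locales auto
  have kE: "\<kappa> \<subseteq> E" using assms(3) unfolding dual_edges_def .
  have x: "\<forall>e\<in>E. 0 \<le> x e" using assms(2) .
  let ?f = "\<lambda>D. (-1::real) ^ t_count \<sigma> D * (-1) ^ kappa_dot_D \<kappa> D * (\<Prod>k\<in>D. K_weight \<alpha> x k)"
  let ?W = "\<lambda>L. (\<Prod>d\<in>Rr L. sqrt (x (edge_of \<alpha> d)))"
  let ?g = "\<lambda>L. (-1::real) ^ card (L \<inter> \<kappa>) * ?W L * (if Ev (Rr L) then 1 else 0)"
  let ?c = "\<lambda>P. \<forall>v\<in>map_verts H \<sigma>. even (card {d\<in>v. edge_of \<alpha> d \<in> P})"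
  have finPow: "finite (Pow E)" using finE by simp
  have "(\<Sum>D\<in>K_matchings H \<alpha> \<sigma>. ?f D) = (\<Sum>p\<in>(SIGMA L:Pow E. SM (Rr L)). ?f ((\<lambda>(L,M). Long L \<union> M) p))"
    unfolding K_decomp using sum.reindex[OF K_inj, of ?f] by (simp add: comp_def)
  also have "\<dots> = (\<Sum>L\<in>Pow E. \<Sum>M\<in>SM (Rr L). ?f (Long L \<union> M))"
    using sum.Sigma[OF finPow, of "\<lambda>L. SM (Rr L)" "\<lambda>L M. ?f (Long L \<union> M)"] SM_fin
    by (simp add: split_def)
  also have "\<dots> = (\<Sum>L\<in>Pow E. ?g L)"
  proof (rule sum.cong[OF refl])
    fix L assume L: "L \<in> Pow E"
    have "(\<Sum>M\<in>SM (Rr L). ?f (Long L \<union> M)) = (\<Sum>M\<in>SM (Rr L). ((-1) ^ card (L \<inter> \<kappa>) * ?W L) * (-1) ^ t_count \<sigma> M)"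
    proof (rule sum.cong[OF refl])
      fix M assume M: "M \<in> SM (Rr L)"
      show "?f (Long L \<union> M) = ((-1) ^ card (L \<inter> \<kappa>) * ?W L) * (-1) ^ t_count \<sigma> M"
        unfolding t_LM kd_LM[OF M] w_LM[of L M x] using L M w_LM[of L M x] by simp
    qed
    also have "\<dots> = ((-1) ^ card (L \<inter> \<kappa>) * ?W L) * (\<Sum>M\<in>SM (Rr L). (-1) ^ t_count \<sigma> M)"
      by (simp add: sum_distrib_left)
    also have "(\<Sum>M\<in>SM (Rr L). (-1::real) ^ t_count \<sigma> M) = (if Ev (Rr L) then 1 else 0)"
      by (rule SM_sum) (auto simp: Rr_def)
    finally show "(\<Sum>M\<in>SM (Rr L). ?f (Long L \<union> M)) = ?g L" by simp
  qed
  also have "\<dots> = (\<Sum>P\<in>Pow E. ?g (E - P))"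
  proof -
    have "bij_betw (\<lambda>P. E - P) (Pow E) (Pow E)"
      by (rule bij_betw_byWitness[where f'="\<lambda>P. E - P"]) auto
    then show ?thesis by (rule sum.reindex_bij_betw[symmetric])
  qed
  finally have R: "(\<Sum>D\<in>K_matchings H \<alpha> \<sigma>. ?f D) = (\<Sum>P\<in>Pow E. ?g (E - P))" .
  have "(-1) ^ card \<kappa> * (\<Sum>D\<in>K_matchings H \<alpha> \<sigma>. ?f D) = (\<Sum>P\<in>Pow E. (-1) ^ card \<kappa> * ?g (E - P))"
    unfolding R by (simp add: sum_distrib_left)
  also have "\<dots> = (\<Sum>P\<in>Pow E. if ?c P then (-1) ^ kappa_dot_P \<kappa> P * (\<Prod>e\<in>P. x e) else 0)"
  proof (rule sum.cong[OF refl])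
    fix P assume P: "P \<in> Pow E"
    then have PE: "P \<subseteq> E" by blast
    have k: "kappa_dot_P \<kappa> P = card (P \<inter> \<kappa>)" unfolding kappa_dot_P_def dual_edge_def
      by (simp add: Int_def)
    have "(-1) ^ card \<kappa> * ?g (E - P) =
       ((-1) ^ card \<kappa> * (-1) ^ card ((E - P) \<inter> \<kappa>)) * ?W (E - P) * (if Ev (Rr (E - P)) then 1 else 0)"
      by (simp add: mult.assoc)
    also have "\<dots> = (-1) ^ card (P \<inter> \<kappa>) * (\<Prod>e\<in>P. x e) * (if ?c P then 1 else 0)"
      unfolding sign_comp[OF kE PE] Rr_comp[OF PE] W_comp[OF PE x] Ev_comp[OF PE] ..
    finally show "(-1) ^ card \<kappa> * ?g (E - P) = (if ?c P then (-1) ^ kappa_dot_P \<kappa> P * (\<Prod>e\<in>P. x e) else 0)"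
      unfolding k by simp
  qed
  also have "\<dots> = (\<Sum>P\<in>{P\<in>Pow E. ?c P}. (-1) ^ kappa_dot_P \<kappa> P * (\<Prod>e\<in>P. x e))"
    by (rule sum.inter_filter[symmetric, OF finPow])
  also have "{P\<in>Pow E. ?c P} = even_subgraphs H \<alpha> \<sigma>" unfolding even_subgraphs_def by blast
  finally show ?thesis by simp
qed


end
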